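(* Let $\alpha,\beta,\lambda,\varepsilon_1,\varepsilon_2$ be positive real numbers and consider the planar system $$s'=s\big(\varepsilon_2-\beta-\varepsilon_2 s+(\varepsilon_1-\varepsilon_2-\lambda)i\big),\qquad i'=i\big(\varepsilon_2-\varepsilon_1-\alpha+(\lambda-\varepsilon_2)s+(\varepsilon_1-\varepsilon_2)i\big)$$ on $D_1=\{(s,i): s\ge0,\ i\ge0,\ s+i\le1\}$, with interior $\overset{o}{D}_1$. Define $$T_0=\varepsilon_2-\beta,\quad T_1=\varepsilon_2-\varepsilon_1-\alpha,\quad T_2=\varepsilon_2-\beta+\frac{(\varepsilon_1-\varepsilon_2-\lambda)(\varepsilon_2-\varepsilon_1-\alpha)}{\varepsilon_2-\varepsilon_1},\quad T_3=\varepsilon_2-\varepsilon_1-\alpha-\frac{(\varepsilon_2-\lambda)(\varepsilon_2-\beta)}{\varepsilon_2}.$$ If $T_0>0$, $T_1>0$, $T_2<0$ and $T_3<0$, then the system has a saddle point in $\overset{o}{D}_1$.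
   Context: Note $T_1>0$ implies $\varepsilon_2\neq\varepsilon_1$, so $T_2$ is defined. A saddle point is a rest point at which some eigenvalues of the linearization have positive real parts and the others negative real parts. This is the special case $b=\beta_1=\gamma=0$ (with $\beta=\beta_2$) of the SIRS proportions system reduced to the $(s,i)$-plane. *)

theory Defs
  imports "HOL-Analysis.Analysis"
begin

definition D1 :: "(real \<times> real) set" where
  "D1 = {(s, i). s \<ge> 0 \<and> i \<ge> 0 \<and> s + i \<le> 1}"

definition sys_field :: "real \<Rightarrow> real \<Rightarrow> real \<Rightarrow> real \<Rightarrow> real \<Rightarrow> real \<times> real \<Rightarrow> real \<times> real" where
  "sys_field \<alpha> \<beta> lam \<epsilon>1 \<epsilon>2 = (\<lambda>(s, i).
     (s * (\<epsilon>2 - \<beta> - \<epsilon>2 * s + (\<epsilon>1 - \<epsilon>2 - lam) * i),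
      i * (\<epsilon>2 - \<epsilon>1 - \<alpha> + (lam - \<epsilon>2) * s + (\<epsilon>1 - \<epsilon>2) * i)))"

text \<open>z is an eigenvalue (over the complex numbers) of the linear map L on R^2:
  det (M - z I) = 0, where M is the matrix of L in the standard basis.\<close>
definition lin_eigenvalue :: "(real \<times> real \<Rightarrow> real \<times> real) \<Rightarrow> complex \<Rightarrow> bool" where
  "lin_eigenvalue L z \<longleftrightarrow>
     (let a = fst (L (1, 0)); c = snd (L (1, 0)); b = fst (L (0, 1)); d = snd (L (0, 1))
      in (complex_of_real a - z) * (complex_of_real d - z) - complex_of_real b * complex_of_real c = 0)"

definition saddle_point :: "(real \<times> real \<Rightarrow> real \<times> real) \<Rightarrow> real \<times> real \<Rightarrow> bool" where
  "saddle_point F p \<longleftrightarrow> F p = (0, 0) \<and>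
     (\<exists>L. (F has_derivative L) (at p) \<and>
        (\<forall>z. lin_eigenvalue L z \<longrightarrow> Re z \<noteq> 0) \<and>
        (\<exists>z. lin_eigenvalue L z \<and> Re z > 0) \<and>
        (\<exists>z. lin_eigenvalue L z \<and> Re z < 0))"

end

theory Submission
  imports Defs
begin

lemma eig_lemma:
  fixes A B C D :: real
  assumes L: "L = (\<lambda>(x::real,y::real). (A*x+B*y, C*x+D*y))" and det: "A*D-B*C < 0"
  shows "(\<forall>z. lin_eigenvalue L z \<longrightarrow> Re z \<noteq> 0) \<and>
        (\<exists>z. lin_eigenvalue L z \<and> Re z > 0) \<and>
        (\<exists>z. lin_eigenvalue L z \<and> Re z < 0)"
proof -
  have ev: "lin_eigenvalue L z \<longleftrightarrow> (complex_of_real A - z) * (complex_of_real D - z) - complex_of_real B * complex_of_real C = 0" for z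
    by (simp add: lin_eigenvalue_def L Let_def)
  define q where "q = sqrt ((A+D)^2 - 4*(A*D-B*C))"
  have nn: "0 \<le> (A+D)^2 - 4*(A*D-B*C)"
  proof -
    have g: "0 \<le> X \<Longrightarrow> Y < 0 \<Longrightarrow> 0 \<le> X - 4*Y" for X Y :: real by linarith
    show ?thesis by (rule g[OF zero_le_power2 det])
  qed
  have q2: "q^2 = (A+D)^2 - 4*(A*D-B*C)" unfolding q_def
    by (rule real_sqrt_pow2[OF nn])
  have qge: "q \<ge> 0" unfolding q_def by (rule real_sqrt_ge_zero[OF nn])
  have qgt: "q > \<bar>A+D\<bar>"
  proof (rule power_less_imp_less_base[of _ 2])
    have h: "Y < 0 \<Longrightarrow> X < X - 4*Y" for X Y :: real by linarith
    show "\<bar>A+D\<bar>^2 < q^2" by (simp only: power2_abs q2) (rule h[OF det])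
  qed (use qge in auto)
  have root: "(A - r) * (D - r) - B*C = 0" if "r = (A+D+q)/2 \<or> r = (A+D-q)/2" for r
  proof -
    have "(A - r) * (D - r) - B*C = (q^2 - ((A+D)^2 - 4*(A*D-B*C)))/4"
      using that by (elim disjE; hypsubst; simp add: field_simps power2_eq_square)
    then show ?thesis using q2 by simp
  qed
  have e1: "lin_eigenvalue L (complex_of_real ((A+D+q)/2))"
    unfolding ev using root[of "(A+D+q)/2"]
    by (metis (mono_tags, lifting) of_real_0 of_real_diff of_real_mult)
  have e2: "lin_eigenvalue L (complex_of_real ((A+D-q)/2))"
    unfolding ev using root[of "(A+D-q)/2"]
    by (metis (mono_tags, lifting) of_real_0 of_real_diff of_real_mult)
  have nz: "Re z \<noteq> 0" if "lin_eigenvalue L z" for z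
  proof
    assume r0: "Re z = 0"
    have "Re ((complex_of_real A - z) * (complex_of_real D - z) - complex_of_real B * complex_of_real C) = 0"
      using that unfolding ev by simp
    then have "A*D - (Im z)^2 - B*C = 0" using r0 by (simp add: power2_eq_square)
    then show False using det by (smt (verit) zero_le_power2)
  qed
  show ?thesis
  proof (intro conjI allI impI exI)
    show "lin_eigenvalue L (complex_of_real ((A+D+q)/2))" by (rule e1)
    show "Re (complex_of_real ((A+D+q)/2)) > 0" using qgt by simp
    show "lin_eigenvalue L (complex_of_real ((A+D-q)/2))" by (rule e2)
    show "Re (complex_of_real ((A+D-q)/2)) < 0" using qgt by simp
  qed (use nz in auto)
qed

theorem proposition3p2:
  fixes \<alpha> \<beta> lam \<epsilon>1 \<epsilon>2 :: real
  assumes "\<alpha> > 0" "\<beta> > 0" "lam > 0" "\<epsilon>1 > 0" "\<epsilon>2 > 0"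
    and "\<epsilon>2 - \<beta> > 0"
    and "\<epsilon>2 - \<epsilon>1 - \<alpha> > 0"
    and "\<epsilon>2 - \<beta> + (\<epsilon>1 - \<epsilon>2 - lam) * (\<epsilon>2 - \<epsilon>1 - \<alpha>) / (\<epsilon>2 - \<epsilon>1) < 0"
    and "\<epsilon>2 - \<epsilon>1 - \<alpha> - (\<epsilon>2 - lam) * (\<epsilon>2 - \<beta>) / \<epsilon>2 < 0"
  shows "\<exists>p \<in> interior D1. saddle_point (sys_field \<alpha> \<beta> lam \<epsilon>1 \<epsilon>2) p"
proof -
  define a where "a = \<epsilon>2"
  define b where "b = \<epsilon>2 + lam - \<epsilon>1"
  define c where "c = \<epsilon>2 - lam"
  define d where "d = \<epsilon>2 - \<epsilon>1"
  define T0 where "T0 = \<epsilon>2 - \<beta>"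
  define T1 where "T1 = \<epsilon>2 - \<epsilon>1 - \<alpha>"
  have d0: "d > 0" using assms unfolding d_def by linarith
  have a0: "a > 0" using assms unfolding a_def by linarith
  have T00: "T0 > 0" and T10: "T1 > 0" using assms unfolding T0_def T1_def by auto
  have T1d: "T1 < d" using assms unfolding T1_def d_def by auto
  have n1: "T0*d - b*T1 < 0"
  proof -
    have "T0 - b*T1/d < 0" using assms(8) unfolding T0_def b_def T1_def d_def
      by (smt (verit, ccfv_SIG) minus_divide_left mult_minus_left)
    then show ?thesis using d0 by (simp add: field_simps)
  qed
  have n2: "a*T1 - c*T0 < 0"
  proof -
    have "T1 - c*T0/a < 0" using assms(9) unfolding T0_def c_def T1_def a_def by simp
    then show ?thesis using a0 by (simp add: field_simps)
  qed
  have b0: "b > 0" using n1 T00 T10 d0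
    by (smt (verit) mult_nonpos_nonneg mult_pos_pos)
  have c0: "c > 0" using n2 T00 T10 a0
    by (smt (verit) mult_nonpos_nonneg mult_pos_pos)
  have "T0*d*(a*T1) < b*T1*(c*T0)"
  proof -
    have "T0*d*(a*T1) < b*T1*(a*T1)" using n1 T10 a0 by (intro mult_strict_right_mono) auto
    also have "\<dots> < b*T1*(c*T0)" using n2 b0 T10 by (intro mult_strict_left_mono) auto
    finally show ?thesis .
  qed
  then have "a*d < b*c" using T00 T10
    by (smt (verit, ccfv_threshold) mult.commute mult.left_commute mult_le_cancel_left_pos mult_pos_pos)
  define Dl where "Dl = a*d - b*c"
  have Dl: "Dl = lam*(lam - \<epsilon>1)" unfolding Dl_def a_def b_def c_def d_def by (simp add: algebra_simps)
  have Dl0: "Dl < 0" using \<open>a*d < b*c\<close> Dl_def by simp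
  define ss where "ss = (T0*d - b*T1)/Dl"
  define ii where "ii = (a*T1 - c*T0)/Dl"
  have s0: "ss > 0" unfolding ss_def using n1 Dl0 by (simp add: divide_neg_neg)
  have i0: "ii > 0" unfolding ii_def using n2 Dl0 by (simp add: divide_neg_neg)
  have eq1: "a * ss + b*ii = T0" unfolding ss_def ii_def using Dl0 by (simp add: field_simps) (simp add: Dl_def algebra_simps)
  have eq2: "c * ss + d*ii = T1" unfolding ss_def ii_def using Dl0 by (simp add: field_simps) (simp add: Dl_def algebra_simps)
  have si: "ss + ii < 1"
  proof -
    have "ss + ii = (T0*d - b*T1 + (a*T1 - c*T0))/Dl" unfolding ss_def ii_def by (simp add: add_divide_distrib)
    also have "T0*d - b*T1 + (a*T1 - c*T0) = (lam - \<epsilon>1)*(T0 - T1)"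
      unfolding a_def b_def c_def d_def by (simp add: algebra_simps)
    finally have si0: "ss + ii = (lam - \<epsilon>1)*(T0 - T1) / Dl" .
    have ne: "lam - \<epsilon>1 \<noteq> 0" using Dl Dl0 by auto
    have si: "ss + ii = (T0 - T1)/lam" unfolding si0 Dl using ne assms(3) by simp
    have "d*(T0 - T1) < lam*T1" using n1 unfolding b_def d_def by (simp add: algebra_simps)
    also have "lam*T1 < lam*d" using T1d assms(3) by simp
    finally have "T0 - T1 < lam" using d0 by (simp add: mult.commute)
    then show ?thesis unfolding si using assms(3) by simp
  qed
  let ?F = "sys_field \<alpha> \<beta> lam \<epsilon>1 \<epsilon>2"
  have F: "?F = (\<lambda>p. (fst p * (T0 - a * fst p - b * snd p), snd p * (T1 - c * fst p - d * snd p)))"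
    unfolding sys_field_def T0_def T1_def a_def b_def c_def d_def
    by (auto simp: fun_eq_iff algebra_simps)
  have int: "(ss, ii) \<in> interior D1"
  proof (rule interiorI)
    show "{p. 0 < fst p \<and> 0 < snd p \<and> fst p + snd p < 1} \<subseteq> D1" by (auto simp: D1_def)
    show "(ss, ii) \<in> {p. 0 < fst p \<and> 0 < snd p \<and> fst p + snd p < 1}" using s0 i0 si by simp
    show "open {p::real\<times>real. 0 < fst p \<and> 0 < snd p \<and> fst p + snd p < 1}"
      by (intro open_Collect_conj open_Collect_less continuous_intros)
  qed
  define L where "L = (\<lambda>(x::real,y::real). ((-a * ss)*x+(-b * ss)*y, (-c*ii)*x+(-d*ii)*y))"
  have deriv: "(?F has_derivative L) (at (ss, ii))"
  proof -
    have "((\<lambda>p. (fst p * (T0 - a * fst p - b * snd p), snd p * (T1 - c * fst p - d * snd p))) has_derivative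
      (\<lambda>h. (fst (ss,ii) * (0 - a * fst h - b * snd h) + fst h * (T0 - a * fst (ss,ii) - b * snd (ss,ii)),
            snd (ss,ii) * (0 - c * fst h - d * snd h) + snd h * (T1 - c * fst (ss,ii) - d * snd (ss,ii))))) (at (ss,ii))"
      by (intro derivative_eq_intros has_derivative_Pair) (auto)
    moreover have "(\<lambda>h. (fst (ss,ii) * (0 - a * fst h - b * snd h) + fst h * (T0 - a * fst (ss,ii) - b * snd (ss,ii)),
            snd (ss,ii) * (0 - c * fst h - d * snd h) + snd h * (T1 - c * fst (ss,ii) - d * snd (ss,ii)))) = L"
      unfolding L_def using eq1 eq2 by (auto simp: fun_eq_iff algebra_simps)
    ultimately show ?thesis unfolding F by simp
  qed
  have rest: "?F (ss, ii) = (0, 0)" unfolding F using eq1 eq2 by (simp add: algebra_simps)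
  have detn: "(-a * ss)*(-d*ii) - (-b * ss)*(-c*ii) < 0"
  proof -
    have "(-a * ss)*(-d*ii) - (-b * ss)*(-c*ii) = (ss*ii)*Dl" unfolding Dl_def by (simp add: algebra_simps)
    also have "\<dots> < 0" using s0 i0 Dl0 by (simp add: mult_pos_neg)
    finally show ?thesis .
  qed
  have "saddle_point ?F (ss, ii)"
    unfolding saddle_point_def using rest deriv eig_lemma[OF L_def detn] by blast
  then show ?thesis using int by blast
qed

end
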